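(* Let $(R,\mathfrak m)$ be a one-dimensional Cohen–Macaulay local ring. Let $I,J$ be regular trace ideals of $R$ with $J\subseteq I$ and $\ell_R(I/J)=2$. Assume that $I:I$ is a local ring and that there exists $q\in I\setminus J$ with $IJ=qJ$ and $I^2\ne qI$. Then the maximal ideal of $I:I$ is $q^{-1}J$.
   Context: $Q(R)$ is the total ring of fractions, $I:I=\{x\in Q(R)\mid xI\subseteq I\}$, and $\ell_R$ denotes length. An ideal is regular if it contains a non-zerodivisor; a trace ideal is an ideal of the form $\sum_{f\in\mathrm{Hom}_R(M,R)}\mathrm{Im}f$ for some $R$-module $M$. *)

theory Defs
  imports "HOL-Algebra.Ideal_Product" "HOL-Algebra.Module" "HOL-Algebra.Ring_Divisibility"
begin

definition nzd :: "('a, 'b) ring_scheme \<Rightarrow> 'a \<Rightarrow> bool" where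
  "nzd R s \<longleftrightarrow> s \<in> carrier R \<and> (\<forall>x\<in>carrier R. s \<otimes>\<^bsub>R\<^esub> x = \<zero>\<^bsub>R\<^esub> \<longrightarrow> x = \<zero>\<^bsub>R\<^esub>)"

definition regular_ideal :: "('a, 'b) ring_scheme \<Rightarrow> 'a set \<Rightarrow> bool" where
  "regular_ideal R I \<longleftrightarrow> ideal I R \<and> (\<exists>s\<in>I. nzd R s)"

text \<open>Q is (a copy of) the total ring of fractions of R: R is a subring of Q (same operations),
  every non-zerodivisor of R is a unit of Q, and every element of Q is a fraction r/s with s a
  non-zerodivisor of R.  This determines Q up to isomorphism over R.\<close>
definition total_ring_of_fractions :: "('a, 'b) ring_scheme \<Rightarrow> ('a, 'c) ring_scheme \<Rightarrow> bool" where
  "total_ring_of_fractions R Q \<longleftrightarrow>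
     cring Q \<and> carrier R \<subseteq> carrier Q \<and>
     (\<forall>x\<in>carrier R. \<forall>y\<in>carrier R. x \<oplus>\<^bsub>R\<^esub> y = x \<oplus>\<^bsub>Q\<^esub> y \<and> x \<otimes>\<^bsub>R\<^esub> y = x \<otimes>\<^bsub>Q\<^esub> y) \<and>
     \<zero>\<^bsub>R\<^esub> = \<zero>\<^bsub>Q\<^esub> \<and> \<one>\<^bsub>R\<^esub> = \<one>\<^bsub>Q\<^esub> \<and>
     (\<forall>s. nzd R s \<longrightarrow> s \<in> Units Q) \<and>
     (\<forall>x\<in>carrier Q. \<exists>r\<in>carrier R. \<exists>s. nzd R s \<and> x = r \<otimes>\<^bsub>Q\<^esub> inv\<^bsub>Q\<^esub> s)"

definition local_ring :: "('a, 'b) ring_scheme \<Rightarrow> bool" where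
  "local_ring R \<longleftrightarrow> cring R \<and> (\<exists>!m. maximalideal m R)"

definition max_ideal :: "('a, 'b) ring_scheme \<Rightarrow> 'a set" where
  "max_ideal R = (THE m. maximalideal m R)"

definition prime_chain :: "('a, 'b) ring_scheme \<Rightarrow> nat \<Rightarrow> bool" where
  "prime_chain R n \<longleftrightarrow> (\<exists>Ps :: 'a set list. length Ps = Suc n \<and>
      (\<forall>P\<in>set Ps. primeideal P R) \<and> (\<forall>i<n. Ps ! i \<subset> Ps ! Suc i))"

definition krull_dim_eq :: "('a, 'b) ring_scheme \<Rightarrow> nat \<Rightarrow> bool" where
  "krull_dim_eq R d \<longleftrightarrow> prime_chain R d \<and> \<not> prime_chain R (Suc d)"

definition regular_sequence :: "('a, 'b) ring_scheme \<Rightarrow> 'a list \<Rightarrow> bool" where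
  "regular_sequence R xs \<longleftrightarrow>
     (\<forall>i<length xs. xs ! i \<in> carrier R \<and>
        (\<forall>y\<in>carrier R. xs ! i \<otimes>\<^bsub>R\<^esub> y \<in> Idl\<^bsub>R\<^esub> (set (take i xs)) \<longrightarrow> y \<in> Idl\<^bsub>R\<^esub> (set (take i xs)))) \<and>
     Idl\<^bsub>R\<^esub> (set xs) \<noteq> carrier R"

definition depth_eq :: "('a, 'b) ring_scheme \<Rightarrow> nat \<Rightarrow> bool" where
  "depth_eq R d \<longleftrightarrow>
     (\<exists>xs. length xs = d \<and> set xs \<subseteq> max_ideal R \<and> regular_sequence R xs) \<and>
     \<not> (\<exists>xs. length xs = Suc d \<and> set xs \<subseteq> max_ideal R \<and> regular_sequence R xs)"

definition cohen_macaulay_local :: "('a, 'b) ring_scheme \<Rightarrow> bool" where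
  "cohen_macaulay_local R \<longleftrightarrow> noetherian_ring R \<and> local_ring R \<and>
     (\<exists>d. krull_dim_eq R d \<and> depth_eq R d)"

text \<open>Length of I/J (J \<subseteq> I ideals) equals n: a composition series of R-submodules of I/J,
  i.e. a chain of ideals J = K_0 \<subset> ... \<subset> K_n = I with no ideal strictly in between consecutive ones.\<close>
definition quotient_length_eq :: "('a, 'b) ring_scheme \<Rightarrow> 'a set \<Rightarrow> 'a set \<Rightarrow> nat \<Rightarrow> bool" where
  "quotient_length_eq R I J n \<longleftrightarrow> (\<exists>Ks :: 'a set list. length Ks = Suc n \<and>
      Ks ! 0 = J \<and> Ks ! n = I \<and> (\<forall>K\<in>set Ks. ideal K R) \<and>
      (\<forall>i<n. Ks ! i \<subset> Ks ! Suc i \<and>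
         \<not> (\<exists>K. ideal K R \<and> Ks ! i \<subset> K \<and> K \<subset> Ks ! Suc i)))"

definition linear_form :: "('a, 'b) ring_scheme \<Rightarrow> ('a, 'm) module \<Rightarrow> ('m \<Rightarrow> 'a) \<Rightarrow> bool" where
  "linear_form R M f \<longleftrightarrow> f \<in> carrier M \<rightarrow> carrier R \<and>
     (\<forall>x\<in>carrier M. \<forall>y\<in>carrier M. f (x \<oplus>\<^bsub>M\<^esub> y) = f x \<oplus>\<^bsub>R\<^esub> f y) \<and>
     (\<forall>a\<in>carrier R. \<forall>x\<in>carrier M. f (a \<odot>\<^bsub>M\<^esub> x) = a \<otimes>\<^bsub>R\<^esub> f x)"

definition trace_of :: "('a, 'b) ring_scheme \<Rightarrow> ('a, 'm) module \<Rightarrow> 'a set" where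
  "trace_of R M = Idl\<^bsub>R\<^esub> (\<Union>{f ` carrier M | f. linear_form R M f})"

definition colon :: "('a, 'c) ring_scheme \<Rightarrow> 'a set \<Rightarrow> 'a set" where
  "colon Q I = {x \<in> carrier Q. \<forall>a\<in>I. x \<otimes>\<^bsub>Q\<^esub> a \<in> I}"

end

theory Submission
  imports Defs
begin

lemma ideal_crit:
  fixes R (structure)
  assumes "cring R" "T \<subseteq> carrier R" "\<zero> \<in> T"
    and add: "\<And>a b. a \<in> T \<Longrightarrow> b \<in> T \<Longrightarrow> a \<oplus> b \<in> T"
    and mul: "\<And>r a. r \<in> carrier R \<Longrightarrow> a \<in> T \<Longrightarrow> r \<otimes> a \<in> T"
  shows "ideal T R"
proof -
  interpret cring R by fact
  have neg: "\<ominus> a \<in> T" if "a \<in> T" for a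
  proof -
    have "a \<in> carrier R" using that assms(2) by blast
    then have "\<ominus> a = (\<ominus> \<one>) \<otimes> a" by (simp add: l_minus)
    then show ?thesis using mul[of "\<ominus> \<one>" a] that by simp
  qed
  show ?thesis
  proof (rule idealI)
    show "ring R" by (rule ring_axioms)
    show "subgroup T (add_monoid R)"
      using assms(2,3) add neg by (intro add.subgroupI) (auto simp: a_inv_def[symmetric])
    show "\<And>a x. a \<in> T \<Longrightarrow> x \<in> carrier R \<Longrightarrow> x \<otimes> a \<in> T" by (rule mul)
    show "\<And>a x. a \<in> T \<Longrightarrow> x \<in> carrier R \<Longrightarrow> a \<otimes> x \<in> T"
      using mul assms(2) m_comm by (metis subsetD)
  qed
qed

lemma chain2:
  fixes R (structure)
  assumes R: "cring R" and iJ: "ideal J R" and iK: "ideal K R" and iI: "ideal I R"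
    and iA: "ideal A R" and iB: "ideal B R"
    and JK: "J \<subset> K" and KI: "K \<subset> I"
    and c1: "\<not> (\<exists>L. ideal L R \<and> J \<subset> L \<and> L \<subset> K)"
    and c2: "\<not> (\<exists>L. ideal L R \<and> K \<subset> L \<and> L \<subset> I)"
    and JA: "J \<subset> A" and AB: "A \<subset> B" and BI: "B \<subset> I"
  shows False
proof -
  interpret cring R by fact
  have int: "ideal (X \<inter> Y) R" if "ideal X R" "ideal Y R" for X Y
    using that by (simp add: i_intersect)
  have AK: "A \<inter> K = J \<or> A \<inter> K = K"
  proof -
    have "\<not> (J \<subset> A \<inter> K \<and> A \<inter> K \<subset> K)" using c1 int[OF iA iK] by blast
    moreover have "J \<subseteq> A \<inter> K" using JA JK by blast
    ultimately show ?thesis by blast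
  qed
  show False
  proof (cases "A \<inter> K = K")
    case True
    then have "K \<subset> B" using AB by blast
    then show ?thesis using c2 iB BI by blast
  next
    case False
    with AK have AKJ: "A \<inter> K = J" by simp
    define L where "L = {a \<oplus> k | a k. a \<in> A \<and> k \<in> K}"
    have Acar: "A \<subseteq> carrier R" using ideal.Icarr[OF iA] by blast
    have Kcar: "K \<subseteq> carrier R" using ideal.Icarr[OF iK] by blast
    have Aadd: "x \<oplus> y \<in> A" if "x \<in> A" "y \<in> A" for x y
      using additive_subgroup.a_closed[OF ideal.axioms(1)[OF iA] that] .
    have Kadd: "x \<oplus> y \<in> K" if "x \<in> K" "y \<in> K" for x y
      using additive_subgroup.a_closed[OF ideal.axioms(1)[OF iK] that] .
    have A0: "\<zero> \<in> A" using additive_subgroup.zero_closed[OF ideal.axioms(1)[OF iA]] .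
    have K0: "\<zero> \<in> K" using additive_subgroup.zero_closed[OF ideal.axioms(1)[OF iK]] .
    have Lmem: "x \<in> L \<longleftrightarrow> (\<exists>a k. x = a \<oplus> k \<and> a \<in> A \<and> k \<in> K)" for x
      unfolding L_def by blast
    have iL: "ideal L R"
    proof (rule ideal_crit[OF R])
      show "L \<subseteq> carrier R"
      proof
        fix x assume "x \<in> L"
        then obtain a k where "x = a \<oplus> k" "a \<in> A" "k \<in> K" unfolding Lmem by blast
        then show "x \<in> carrier R" using Acar Kcar by (metis a_closed subsetD)
      qed
      have "\<zero> = \<zero> \<oplus> \<zero>" by simp
      then show "\<zero> \<in> L" unfolding Lmem using A0 K0 by blast
      show "a \<oplus> b \<in> L" if aL: "a \<in> L" and bL: "b \<in> L" for a b
      proof -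
        obtain a1 k1 where 1: "a = a1 \<oplus> k1" "a1 \<in> A" "k1 \<in> K" using Lmem[THEN iffD1, OF aL] by blast
        obtain a2 k2 where 2: "b = a2 \<oplus> k2" "a2 \<in> A" "k2 \<in> K" using Lmem[THEN iffD1, OF bL] by blast
        have c: "a1 \<in> carrier R" "a2 \<in> carrier R" "k1 \<in> carrier R" "k2 \<in> carrier R"
          using 1 2 Acar Kcar by blast+
        have "a \<oplus> b = (a1 \<oplus> a2) \<oplus> (k1 \<oplus> k2)"
          unfolding 1 2 using c by (simp add: a_ac)
        moreover have "a1 \<oplus> a2 \<in> A" using 1 2 Aadd by blast
        moreover have "k1 \<oplus> k2 \<in> K" using 1 2 Kadd by blast
        ultimately show ?thesis unfolding Lmem by blast
      qed
      show "r \<otimes> a \<in> L" if rR: "r \<in> carrier R" and aL: "a \<in> L" for r a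
      proof -
        obtain a1 k1 where 1: "a = a1 \<oplus> k1" "a1 \<in> A" "k1 \<in> K" using Lmem[THEN iffD1, OF aL] by blast
        have c: "a1 \<in> carrier R" "k1 \<in> carrier R" using 1 Acar Kcar by blast+
        have "r \<otimes> a = r \<otimes> a1 \<oplus> r \<otimes> k1" unfolding 1 using c rR by (rule r_distr)
        moreover have "r \<otimes> a1 \<in> A" using ideal.I_l_closed[OF iA 1(2) rR] .
        moreover have "r \<otimes> k1 \<in> K" using ideal.I_l_closed[OF iK 1(3) rR] .
        ultimately show ?thesis unfolding Lmem by blast
      qed
    qed
    have KL: "K \<subseteq> L"
    proof
      fix k assume kK: "k \<in> K"
      then have "k = \<zero> \<oplus> k" using Kcar by auto
      then show "k \<in> L" unfolding Lmem using A0 kK by blast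
    qed
    have LI: "L \<subseteq> I"
    proof
      fix x assume "x \<in> L"
      then obtain a k where xak: "x = a \<oplus> k" "a \<in> A" "k \<in> K" unfolding Lmem by blast
      have "a \<in> I" using xak(2) AB BI by blast
      moreover have "k \<in> I" using xak(3) KI by blast
      ultimately show "x \<in> I" unfolding xak(1) using additive_subgroup.a_closed[OF ideal.axioms(1)[OF iI]] by blast
    qed
    have "\<not> (K \<subset> L \<and> L \<subset> I)" using c2 iL by blast
    then have "L = K \<or> L = I" using KL LI by blast
    moreover have "L \<noteq> K"
    proof
      assume LK: "L = K"
      have "A \<subseteq> L"
      proof
        fix a assume aA: "a \<in> A"
        then have "a = a \<oplus> \<zero>" using Acar by auto
        then show "a \<in> L" unfolding Lmem using aA K0 by blast
      qed
      then have "A \<subseteq> A \<inter> K" using LK by blast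
      then show False using AKJ JA by blast
    qed
    ultimately have LI: "L = I" by simp
    have BK: "B \<inter> K = J \<or> B \<inter> K = K"
    proof -
      have "\<not> (J \<subset> B \<inter> K \<and> B \<inter> K \<subset> K)" using c1 int[OF iB iK] by blast
      moreover have "J \<subseteq> B \<inter> K" using JA AB JK by blast
      ultimately show ?thesis by blast
    qed
    have Badd: "x \<oplus> y \<in> B" if "x \<in> B" "y \<in> B" for x y
      using additive_subgroup.a_closed[OF ideal.axioms(1)[OF iB] that] .
    show False
    proof (cases "B \<inter> K = K")
      case True
      have "L \<subseteq> B"
      proof
        fix x assume "x \<in> L"
        then obtain a k where xak: "x = a \<oplus> k" "a \<in> A" "k \<in> K" unfolding Lmem by blast
        have "a \<in> B" using xak(2) AB by blast
        moreover have "k \<in> B" using xak(3) True by blast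
        ultimately show "x \<in> B" unfolding xak(1) by (rule Badd)
      qed
      then show False using LI BI by blast
    next
      case False
      with BK have BKJ: "B \<inter> K = J" by simp
      obtain b where b: "b \<in> B" "b \<notin> A" using AB by blast
      then have "b \<in> L" using LI BI by blast
      then obtain a k where ak: "b = a \<oplus> k" "a \<in> A" "k \<in> K" unfolding Lmem by blast
      have ac: "a \<in> carrier R" "k \<in> carrier R" using ak Acar Kcar by blast+
      have kb: "k = \<ominus> a \<oplus> b" unfolding ak(1) using ac by (simp add: a_assoc[symmetric] l_neg)
      have "a \<in> B" using ak(2) AB by blast
      then have "\<ominus> a \<in> B" using additive_subgroup.a_inv_closed[OF ideal.axioms(1)[OF iB]] by blast
      then have "k \<in> B" unfolding kb using b(1) by (rule Badd)
      then have "k \<in> J" using BKJ ak(3) by blast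
      then have "k \<in> A" using JA by blast
      then have "b \<in> A" unfolding ak(1) using ak(2) by (rule Aadd[rotated])
      then show False using b by blast
    qed
  qed
qed
lemma trace_mult:
  fixes R :: "('a, 'b) ring_scheme" and Q :: "('a, 'c) ring_scheme" and M :: "('a, 'm) module"
  assumes R: "cring R" and Q: "cring Q" and sub: "carrier R \<subseteq> carrier Q"
    and add: "\<And>x y. x \<in> carrier R \<Longrightarrow> y \<in> carrier R \<Longrightarrow> x \<oplus>\<^bsub>R\<^esub> y = x \<oplus>\<^bsub>Q\<^esub> y"
    and mul: "\<And>x y. x \<in> carrier R \<Longrightarrow> y \<in> carrier R \<Longrightarrow> x \<otimes>\<^bsub>R\<^esub> y = x \<otimes>\<^bsub>Q\<^esub> y"
    and z: "\<zero>\<^bsub>R\<^esub> = \<zero>\<^bsub>Q\<^esub>"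
    and JM: "J = trace_of R M" and iJ: "ideal J R"
    and x: "x \<in> carrier Q" and hx: "\<And>a. a \<in> J \<Longrightarrow> x \<otimes>\<^bsub>Q\<^esub> a \<in> carrier R"
    and j: "j \<in> J"
  shows "x \<otimes>\<^bsub>Q\<^esub> j \<in> J"
proof -
  interpret R: cring R by fact
  interpret Q: cring Q by fact
  define G where "G = \<Union>{f ` carrier M | f. linear_form R M f}"
  have JG: "J = \<Inter>{I. ideal I R \<and> G \<subseteq> I}"
    unfolding JM trace_of_def genideal_def G_def ..
  have GJ: "G \<subseteq> J" unfolding JG by blast
  have Jcar: "J \<subseteq> carrier R" using ideal.Icarr[OF iJ] by blast
  define T where "T = {j \<in> J. x \<otimes>\<^bsub>Q\<^esub> j \<in> J}"
  have iT: "ideal T R"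
  proof (rule ideal_crit[OF R])
    show "T \<subseteq> carrier R" unfolding T_def using Jcar by blast
    have "x \<otimes>\<^bsub>Q\<^esub> \<zero>\<^bsub>R\<^esub> = \<zero>\<^bsub>R\<^esub>" unfolding z using x by simp
    moreover have "\<zero>\<^bsub>R\<^esub> \<in> J" using additive_subgroup.zero_closed[OF ideal.axioms(1)[OF iJ]] .
    ultimately show "\<zero>\<^bsub>R\<^esub> \<in> T" unfolding T_def by simp
    show "a \<oplus>\<^bsub>R\<^esub> b \<in> T" if aT: "a \<in> T" and bT: "b \<in> T" for a b
    proof -
      have a: "a \<in> J" "x \<otimes>\<^bsub>Q\<^esub> a \<in> J" and b: "b \<in> J" "x \<otimes>\<^bsub>Q\<^esub> b \<in> J" using aT bT unfolding T_def by auto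
      have c: "a \<in> carrier Q" "b \<in> carrier Q" using a b Jcar sub by blast+
      have c2: "x \<otimes>\<^bsub>Q\<^esub> a \<in> carrier R" "x \<otimes>\<^bsub>Q\<^esub> b \<in> carrier R" using a b Jcar by blast+
      have "x \<otimes>\<^bsub>Q\<^esub> (a \<oplus>\<^bsub>R\<^esub> b) = x \<otimes>\<^bsub>Q\<^esub> (a \<oplus>\<^bsub>Q\<^esub> b)" using a b Jcar add by (metis subsetD)
      also have "\<dots> = (x \<otimes>\<^bsub>Q\<^esub> a) \<oplus>\<^bsub>Q\<^esub> (x \<otimes>\<^bsub>Q\<^esub> b)" using c x by (simp add: Q.r_distr)
      also have "\<dots> = (x \<otimes>\<^bsub>Q\<^esub> a) \<oplus>\<^bsub>R\<^esub> (x \<otimes>\<^bsub>Q\<^esub> b)" using c2 add by simp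
      finally have e: "x \<otimes>\<^bsub>Q\<^esub> (a \<oplus>\<^bsub>R\<^esub> b) = (x \<otimes>\<^bsub>Q\<^esub> a) \<oplus>\<^bsub>R\<^esub> (x \<otimes>\<^bsub>Q\<^esub> b)" .
      have "a \<oplus>\<^bsub>R\<^esub> b \<in> J" using additive_subgroup.a_closed[OF ideal.axioms(1)[OF iJ] a(1) b(1)] .
      moreover have "x \<otimes>\<^bsub>Q\<^esub> (a \<oplus>\<^bsub>R\<^esub> b) \<in> J" unfolding e
        using additive_subgroup.a_closed[OF ideal.axioms(1)[OF iJ] a(2) b(2)] .
      ultimately show ?thesis unfolding T_def by simp
    qed
    show "r \<otimes>\<^bsub>R\<^esub> a \<in> T" if rR: "r \<in> carrier R" and aT: "a \<in> T" for r a
    proof -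
      have a: "a \<in> J" "x \<otimes>\<^bsub>Q\<^esub> a \<in> J" using aT unfolding T_def by auto
      have c: "a \<in> carrier Q" "r \<in> carrier Q" using a rR Jcar sub by blast+
      have c2: "x \<otimes>\<^bsub>Q\<^esub> a \<in> carrier R" "a \<in> carrier R" using a Jcar by blast+
      have "x \<otimes>\<^bsub>Q\<^esub> (r \<otimes>\<^bsub>R\<^esub> a) = x \<otimes>\<^bsub>Q\<^esub> (r \<otimes>\<^bsub>Q\<^esub> a)" using rR c2 mul by simp
      also have "\<dots> = r \<otimes>\<^bsub>Q\<^esub> (x \<otimes>\<^bsub>Q\<^esub> a)" using c x by (metis Q.m_assoc Q.m_comm)
      also have "\<dots> = r \<otimes>\<^bsub>R\<^esub> (x \<otimes>\<^bsub>Q\<^esub> a)" using c2 rR mul by simp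
      finally have e: "x \<otimes>\<^bsub>Q\<^esub> (r \<otimes>\<^bsub>R\<^esub> a) = r \<otimes>\<^bsub>R\<^esub> (x \<otimes>\<^bsub>Q\<^esub> a)" .
      have "r \<otimes>\<^bsub>R\<^esub> a \<in> J" using ideal.I_l_closed[OF iJ a(1) rR] .
      moreover have "x \<otimes>\<^bsub>Q\<^esub> (r \<otimes>\<^bsub>R\<^esub> a) \<in> J" unfolding e using ideal.I_l_closed[OF iJ a(2) rR] .
      ultimately show ?thesis unfolding T_def by simp
    qed
  qed
  have GT: "G \<subseteq> T"
  proof
    fix y assume "y \<in> G"
    then obtain f m where f: "linear_form R M f" "m \<in> carrier M" "y = f m" unfolding G_def by blast
    have fc: "f \<in> carrier M \<rightarrow> carrier R"
      and fa: "\<And>u v. u \<in> carrier M \<Longrightarrow> v \<in> carrier M \<Longrightarrow> f (u \<oplus>\<^bsub>M\<^esub> v) = f u \<oplus>\<^bsub>R\<^esub> f v"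
      and fs: "\<And>r u. r \<in> carrier R \<Longrightarrow> u \<in> carrier M \<Longrightarrow> f (r \<odot>\<^bsub>M\<^esub> u) = r \<otimes>\<^bsub>R\<^esub> f u"
      using f(1) unfolding linear_form_def by auto
    have fJ: "f u \<in> J" if "u \<in> carrier M" for u
    proof -
      have "f u \<in> G" unfolding G_def using f(1) that by blast
      then show ?thesis using GJ by blast
    qed
    define g where "g = (\<lambda>u. x \<otimes>\<^bsub>Q\<^esub> f u)"
    have "linear_form R M g"
      unfolding linear_form_def
    proof (intro conjI ballI)
      show "g \<in> carrier M \<rightarrow> carrier R" unfolding g_def using hx fJ by blast
      fix u v assume u: "u \<in> carrier M" and v: "v \<in> carrier M"
      have c: "f u \<in> carrier R" "f v \<in> carrier R" using fJ u v Jcar by blast+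
      have cq: "f u \<in> carrier Q" "f v \<in> carrier Q" using c sub by blast+
      have c2: "x \<otimes>\<^bsub>Q\<^esub> f u \<in> carrier R" "x \<otimes>\<^bsub>Q\<^esub> f v \<in> carrier R" using hx fJ u v by blast+
      have "g (u \<oplus>\<^bsub>M\<^esub> v) = x \<otimes>\<^bsub>Q\<^esub> (f u \<oplus>\<^bsub>Q\<^esub> f v)" unfolding g_def fa[OF u v] add[OF c] ..
      also have "\<dots> = (x \<otimes>\<^bsub>Q\<^esub> f u) \<oplus>\<^bsub>Q\<^esub> (x \<otimes>\<^bsub>Q\<^esub> f v)" using cq x by (simp add: Q.r_distr)
      also have "\<dots> = g u \<oplus>\<^bsub>R\<^esub> g v" unfolding g_def add[OF c2] ..
      finally show "g (u \<oplus>\<^bsub>M\<^esub> v) = g u \<oplus>\<^bsub>R\<^esub> g v" .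
    next
      fix r u assume r: "r \<in> carrier R" and u: "u \<in> carrier M"
      have c: "f u \<in> carrier R" using fJ u Jcar by blast
      have cq: "f u \<in> carrier Q" "r \<in> carrier Q" using c r sub by blast+
      have c2: "x \<otimes>\<^bsub>Q\<^esub> f u \<in> carrier R" using hx fJ u by blast
      have "g (r \<odot>\<^bsub>M\<^esub> u) = x \<otimes>\<^bsub>Q\<^esub> (r \<otimes>\<^bsub>Q\<^esub> f u)" unfolding g_def fs[OF r u] mul[OF r c] ..
      also have "\<dots> = r \<otimes>\<^bsub>Q\<^esub> (x \<otimes>\<^bsub>Q\<^esub> f u)" using cq x by (metis Q.m_assoc Q.m_comm)
      also have "\<dots> = r \<otimes>\<^bsub>R\<^esub> g u" unfolding g_def mul[OF r c2] ..
      finally show "g (r \<odot>\<^bsub>M\<^esub> u) = r \<otimes>\<^bsub>R\<^esub> g u" .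
    qed
    then have "g m \<in> G" unfolding G_def using f(2) by blast
    then have "x \<otimes>\<^bsub>Q\<^esub> y \<in> J" using GJ f(3) unfolding g_def by blast
    then show "y \<in> T" unfolding T_def using fJ f(2,3) by blast
  qed
  have "J \<subseteq> T" unfolding JG using iT GT by blast
  then show ?thesis using j unfolding T_def by blast
qed

theorem lemma2p7:
  fixes R :: "('a, 'b) ring_scheme" and Q :: "('a, 'c) ring_scheme"
    and I J :: "'a set" and q :: 'a
    and MI :: "('a, 'm1) module" and MJ :: "('a, 'm2) module"
  assumes CM: "cohen_macaulay_local R" and dim1: "krull_dim_eq R 1"
    and QR: "total_ring_of_fractions R Q"
    and regI: "regular_ideal R I" and regJ: "regular_ideal R J"
    and trI: "module R MI" "I = trace_of R MI"
    and trJ: "module R MJ" "J = trace_of R MJ"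
    and JI: "J \<subseteq> I" and len: "quotient_length_eq R I J 2"
    and loc: "local_ring (Q\<lparr>carrier := colon Q I\<rparr>)"
    and q: "q \<in> I - J"
    and IJ: "I \<cdot>\<^bsub>R\<^esub> J = (\<lambda>j. q \<otimes>\<^bsub>R\<^esub> j) ` J"
    and II: "I \<cdot>\<^bsub>R\<^esub> I \<noteq> (\<lambda>a. q \<otimes>\<^bsub>R\<^esub> a) ` I"
  shows "max_ideal (Q\<lparr>carrier := colon Q I\<rparr>) = (\<lambda>j. inv\<^bsub>Q\<^esub> q \<otimes>\<^bsub>Q\<^esub> j) ` J"
proof -
  have cR: "cring R" using CM unfolding cohen_macaulay_local_def local_ring_def by blast
  interpret R: cring R by fact
  have cQ: "cring Q" and sub: "carrier R \<subseteq> carrier Q"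
    and ops: "\<forall>x\<in>carrier R. \<forall>y\<in>carrier R. x \<oplus>\<^bsub>R\<^esub> y = x \<oplus>\<^bsub>Q\<^esub> y \<and> x \<otimes>\<^bsub>R\<^esub> y = x \<otimes>\<^bsub>Q\<^esub> y"
    and z: "\<zero>\<^bsub>R\<^esub> = \<zero>\<^bsub>Q\<^esub>" and o: "\<one>\<^bsub>R\<^esub> = \<one>\<^bsub>Q\<^esub>"
    and un: "\<forall>s. nzd R s \<longrightarrow> s \<in> Units Q"
    using QR unfolding total_ring_of_fractions_def by blast+
  interpret Q: cring Q by fact
  have add: "x \<oplus>\<^bsub>R\<^esub> y = x \<oplus>\<^bsub>Q\<^esub> y" if "x \<in> carrier R" "y \<in> carrier R" for x y
    using ops that by blast
  have mul: "x \<otimes>\<^bsub>R\<^esub> y = x \<otimes>\<^bsub>Q\<^esub> y" if "x \<in> carrier R" "y \<in> carrier R" for x y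
    using ops that by blast
  have iI: "ideal I R" using regI unfolding regular_ideal_def by blast
  have iJ: "ideal J R" using regJ unfolding regular_ideal_def by blast
  have Icar: "I \<subseteq> carrier R" using ideal.Icarr[OF iI] by blast
  have Jcar: "J \<subseteq> carrier R" using ideal.Icarr[OF iJ] by blast
  define S where "S = colon Q I"
  define Sr where "Sr = Q\<lparr>carrier := S\<rparr>"
  have cS: "cring Sr" using loc unfolding Sr_def S_def local_ring_def by blast
  have Smem: "x \<in> S \<longleftrightarrow> x \<in> carrier Q \<and> (\<forall>a\<in>I. x \<otimes>\<^bsub>Q\<^esub> a \<in> I)" for x
    unfolding S_def colon_def by blast
  have RS: "carrier R \<subseteq> S"
  proof
    fix r assume r: "r \<in> carrier R"
    have "r \<otimes>\<^bsub>Q\<^esub> a \<in> I" if "a \<in> I" for a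
      using ideal.I_l_closed[OF iI that r] mul[OF r] that Icar by auto
    then show "r \<in> S" unfolding Smem using r sub by blast
  qed
  have qI: "q \<in> I" and qJ: "q \<notin> J" using q by auto
  have qR: "q \<in> carrier R" using qI Icar by blast
  have qQ: "q \<in> carrier Q" using qR sub by blast
  obtain t where t: "t \<in> I" "nzd R t" using regI unfolding regular_ideal_def by blast
  obtain s where s: "s \<in> J" "nzd R s" using regJ unfolding regular_ideal_def by blast
  have "t \<otimes>\<^bsub>R\<^esub> s \<in> I \<cdot>\<^bsub>R\<^esub> J" using t(1) s(1) by (rule ideal_prod.prod)
  then obtain j0 where j0: "j0 \<in> J" "t \<otimes>\<^bsub>R\<^esub> s = q \<otimes>\<^bsub>R\<^esub> j0" unfolding IJ by blast
  have nzq: "nzd R q" unfolding nzd_def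
  proof (intro conjI ballI impI)
    show "q \<in> carrier R" by fact
    fix x assume x: "x \<in> carrier R" and qx: "q \<otimes>\<^bsub>R\<^esub> x = \<zero>\<^bsub>R\<^esub>"
    have tc: "t \<in> carrier R" "s \<in> carrier R" "j0 \<in> carrier R" using t s j0 Icar Jcar by blast+
    have "t \<otimes>\<^bsub>R\<^esub> (s \<otimes>\<^bsub>R\<^esub> x) = (t \<otimes>\<^bsub>R\<^esub> s) \<otimes>\<^bsub>R\<^esub> x" using tc x by (simp add: R.m_assoc)
    also have "\<dots> = j0 \<otimes>\<^bsub>R\<^esub> (q \<otimes>\<^bsub>R\<^esub> x)" unfolding j0(2) using tc x qR by (metis R.m_assoc R.m_comm)
    also have "\<dots> = \<zero>\<^bsub>R\<^esub>" unfolding qx using tc by simp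
    finally have "s \<otimes>\<^bsub>R\<^esub> x = \<zero>\<^bsub>R\<^esub>" using t(2) tc x unfolding nzd_def by blast
    then show "x = \<zero>\<^bsub>R\<^esub>" using s(2) x unfolding nzd_def by blast
  qed
  have qU: "q \<in> Units Q" using un nzq by blast
  define qi where "qi = inv\<^bsub>Q\<^esub> q"
  have qiQ: "qi \<in> carrier Q" unfolding qi_def using qU by simp
  have qiq: "qi \<otimes>\<^bsub>Q\<^esub> q = \<one>\<^bsub>Q\<^esub>" "q \<otimes>\<^bsub>Q\<^esub> qi = \<one>\<^bsub>Q\<^esub>" unfolding qi_def using qU by simp_all
  have qcancel: "qi \<otimes>\<^bsub>Q\<^esub> (q \<otimes>\<^bsub>Q\<^esub> y) = y" "q \<otimes>\<^bsub>Q\<^esub> (qi \<otimes>\<^bsub>Q\<^esub> y) = y" if "y \<in> carrier Q" for y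
    using qiq qiQ qQ that by (simp_all add: Q.m_assoc[symmetric])
  have key: "x \<otimes>\<^bsub>Q\<^esub> j \<in> J" if x: "x \<in> S" and j: "j \<in> J" for x j
  proof (rule trace_mult[OF cR cQ sub _ _ z trJ(2) iJ])
    show "\<And>x y. x \<in> carrier R \<Longrightarrow> y \<in> carrier R \<Longrightarrow> x \<oplus>\<^bsub>R\<^esub> y = x \<oplus>\<^bsub>Q\<^esub> y" by (rule add)
    show "\<And>x y. x \<in> carrier R \<Longrightarrow> y \<in> carrier R \<Longrightarrow> x \<otimes>\<^bsub>R\<^esub> y = x \<otimes>\<^bsub>Q\<^esub> y" by (rule mul)
    show "x \<in> carrier Q" using x Smem by blast
    show "x \<otimes>\<^bsub>Q\<^esub> a \<in> carrier R" if "a \<in> J" for a using x that JI Icar Smem by blast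
    show "j \<in> J" by fact
  qed
  have MS: "qi \<otimes>\<^bsub>Q\<^esub> j \<in> S" if j: "j \<in> J" for j
  proof -
    have jR: "j \<in> carrier R" using j Jcar by blast
    have jQ: "j \<in> carrier Q" using jR sub by blast
    have "(qi \<otimes>\<^bsub>Q\<^esub> j) \<otimes>\<^bsub>Q\<^esub> a \<in> I" if a: "a \<in> I" for a
    proof -
      have aR: "a \<in> carrier R" using a Icar by blast
      have aQ: "a \<in> carrier Q" using aR sub by blast
      have "a \<otimes>\<^bsub>R\<^esub> j \<in> I \<cdot>\<^bsub>R\<^esub> J" using a j by (rule ideal_prod.prod)
      then obtain j' where j': "j' \<in> J" "a \<otimes>\<^bsub>R\<^esub> j = q \<otimes>\<^bsub>R\<^esub> j'" unfolding IJ by blast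
      have j'R: "j' \<in> carrier R" using j' Jcar by blast
      have j'Q: "j' \<in> carrier Q" using j'R sub by blast
      have "(qi \<otimes>\<^bsub>Q\<^esub> j) \<otimes>\<^bsub>Q\<^esub> a = qi \<otimes>\<^bsub>Q\<^esub> (a \<otimes>\<^bsub>Q\<^esub> j)"
        using qiQ jQ aQ by (metis Q.m_assoc Q.m_comm)
      also have "\<dots> = qi \<otimes>\<^bsub>Q\<^esub> (q \<otimes>\<^bsub>Q\<^esub> j')" using j'(2) mul[OF aR jR] mul[OF qR j'R] by simp
      also have "\<dots> = j'" using qcancel j'Q by blast
      finally show ?thesis using j'(1) JI by auto
    qed
    moreover have "qi \<otimes>\<^bsub>Q\<^esub> j \<in> carrier Q" using qiQ jQ by simp
    ultimately show ?thesis unfolding Smem by blast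
  qed
  have qS: "q \<otimes>\<^bsub>Q\<^esub> x \<in> I" if x: "x \<in> S" for x
  proof -
    have "x \<otimes>\<^bsub>Q\<^esub> q \<in> I" using x qI Smem by blast
    moreover have "x \<in> carrier Q" using x Smem by blast
    ultimately show ?thesis using qQ by (simp add: Q.m_comm)
  qed
  have SQ: "S \<subseteq> carrier Q" using Smem by blast
  have Sr_simps: "carrier Sr = S" "\<And>x y. x \<otimes>\<^bsub>Sr\<^esub> y = x \<otimes>\<^bsub>Q\<^esub> y" "\<And>x y. x \<oplus>\<^bsub>Sr\<^esub> y = x \<oplus>\<^bsub>Q\<^esub> y"
    "\<zero>\<^bsub>Sr\<^esub> = \<zero>\<^bsub>Q\<^esub>" "\<one>\<^bsub>Sr\<^esub> = \<one>\<^bsub>Q\<^esub>" unfolding Sr_def by simp_all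
  define M where "M = (\<lambda>j. qi \<otimes>\<^bsub>Q\<^esub> j) ` J"
  have oneS: "\<one>\<^bsub>Q\<^esub> \<in> S" using RS o by auto
  have iM: "ideal M Sr"
  proof (rule ideal_crit[OF cS])
    show "M \<subseteq> carrier Sr" unfolding M_def Sr_simps using MS by blast
    have "\<zero>\<^bsub>R\<^esub> \<in> J" using additive_subgroup.zero_closed[OF ideal.axioms(1)[OF iJ]] .
    moreover have "qi \<otimes>\<^bsub>Q\<^esub> \<zero>\<^bsub>R\<^esub> = \<zero>\<^bsub>Q\<^esub>" unfolding z using qiQ by simp
    ultimately show "\<zero>\<^bsub>Sr\<^esub> \<in> M" unfolding M_def Sr_simps by force
    show "a \<oplus>\<^bsub>Sr\<^esub> b \<in> M" if ab: "a \<in> M" "b \<in> M" for a b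
    proof -
      obtain j1 j2 where j: "j1 \<in> J" "j2 \<in> J" "a = qi \<otimes>\<^bsub>Q\<^esub> j1" "b = qi \<otimes>\<^bsub>Q\<^esub> j2"
        using ab unfolding M_def by blast
      have jR: "j1 \<in> carrier R" "j2 \<in> carrier R" using j Jcar by blast+
      have jQ: "j1 \<in> carrier Q" "j2 \<in> carrier Q" using jR sub by blast+
      have "a \<oplus>\<^bsub>Sr\<^esub> b = qi \<otimes>\<^bsub>Q\<^esub> (j1 \<oplus>\<^bsub>Q\<^esub> j2)" unfolding Sr_simps j(3,4)
        using qiQ jQ by (simp add: Q.r_distr)
      also have "\<dots> = qi \<otimes>\<^bsub>Q\<^esub> (j1 \<oplus>\<^bsub>R\<^esub> j2)" using add[OF jR] by simp
      finally show ?thesis unfolding M_def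
        using additive_subgroup.a_closed[OF ideal.axioms(1)[OF iJ] j(1,2)] by blast
    qed
    show "r \<otimes>\<^bsub>Sr\<^esub> a \<in> M" if r: "r \<in> carrier Sr" and aM: "a \<in> M" for r a
    proof -
      obtain j where j: "j \<in> J" "a = qi \<otimes>\<^bsub>Q\<^esub> j" using aM unfolding M_def by blast
      have jQ: "j \<in> carrier Q" using j Jcar sub by blast
      have rQ: "r \<in> carrier Q" using r SQ Sr_simps by blast
      have "r \<otimes>\<^bsub>Sr\<^esub> a = qi \<otimes>\<^bsub>Q\<^esub> (r \<otimes>\<^bsub>Q\<^esub> j)" unfolding Sr_simps j(2)
        using qiQ jQ rQ by (metis Q.m_assoc Q.m_comm)
      moreover have "r \<otimes>\<^bsub>Q\<^esub> j \<in> J" using key r j(1) Sr_simps by simp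
      ultimately show ?thesis unfolding M_def by blast
    qed
  qed
  have notcarr: "carrier Sr \<noteq> M"
  proof
    assume "carrier Sr = M"
    then have "\<one>\<^bsub>Q\<^esub> \<in> M" using oneS Sr_simps by simp
    then obtain j where j: "j \<in> J" "\<one>\<^bsub>Q\<^esub> = qi \<otimes>\<^bsub>Q\<^esub> j" unfolding M_def by blast
    have jQ: "j \<in> carrier Q" using j Jcar sub by blast
    have "q = q \<otimes>\<^bsub>Q\<^esub> \<one>\<^bsub>Q\<^esub>" using qQ by simp
    also have "\<dots> = j" unfolding j(2) using qcancel jQ by blast
    finally show False using j(1) qJ by simp
  qed
  have img_ideal: "ideal ((\<lambda>n. q \<otimes>\<^bsub>Q\<^esub> n) ` N) R" if iN: "ideal N Sr" for N
  proof (rule ideal_crit[OF cR])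
    have NS: "N \<subseteq> S" using ideal.Icarr[OF iN] Sr_simps by blast
    show "(\<lambda>n. q \<otimes>\<^bsub>Q\<^esub> n) ` N \<subseteq> carrier R" using NS qS Icar by blast
    have "\<zero>\<^bsub>Q\<^esub> \<in> N" using additive_subgroup.zero_closed[OF ideal.axioms(1)[OF iN]] Sr_simps by simp
    moreover have "\<zero>\<^bsub>R\<^esub> = q \<otimes>\<^bsub>Q\<^esub> \<zero>\<^bsub>Q\<^esub>" using z qQ by simp
    ultimately show "\<zero>\<^bsub>R\<^esub> \<in> (\<lambda>n. q \<otimes>\<^bsub>Q\<^esub> n) ` N" by blast
    show "a \<oplus>\<^bsub>R\<^esub> b \<in> (\<lambda>n. q \<otimes>\<^bsub>Q\<^esub> n) ` N" if ab: "a \<in> (\<lambda>n. q \<otimes>\<^bsub>Q\<^esub> n) ` N" "b \<in> (\<lambda>n. q \<otimes>\<^bsub>Q\<^esub> n) ` N" for a b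
    proof -
      obtain n1 n2 where n: "n1 \<in> N" "n2 \<in> N" "a = q \<otimes>\<^bsub>Q\<^esub> n1" "b = q \<otimes>\<^bsub>Q\<^esub> n2" using ab by blast
      have nQ: "n1 \<in> carrier Q" "n2 \<in> carrier Q" using n NS SQ by blast+
      have abR: "a \<in> carrier R" "b \<in> carrier R" using n NS qS Icar by blast+
      have "a \<oplus>\<^bsub>R\<^esub> b = a \<oplus>\<^bsub>Q\<^esub> b" by (rule add[OF abR])
      also have "\<dots> = q \<otimes>\<^bsub>Q\<^esub> (n1 \<oplus>\<^bsub>Q\<^esub> n2)" unfolding n(3,4) using qQ nQ by (simp add: Q.r_distr)
      finally have "a \<oplus>\<^bsub>R\<^esub> b = q \<otimes>\<^bsub>Q\<^esub> (n1 \<oplus>\<^bsub>Q\<^esub> n2)" .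
      moreover have "n1 \<oplus>\<^bsub>Q\<^esub> n2 \<in> N" using additive_subgroup.a_closed[OF ideal.axioms(1)[OF iN] n(1,2)] Sr_simps by simp
      ultimately show ?thesis by blast
    qed
    show "r \<otimes>\<^bsub>R\<^esub> a \<in> (\<lambda>n. q \<otimes>\<^bsub>Q\<^esub> n) ` N" if r: "r \<in> carrier R" and aN: "a \<in> (\<lambda>n. q \<otimes>\<^bsub>Q\<^esub> n) ` N" for r a
    proof -
      obtain n where n: "n \<in> N" "a = q \<otimes>\<^bsub>Q\<^esub> n" using aN by blast
      have nQ: "n \<in> carrier Q" using n NS SQ by blast
      have aR: "a \<in> carrier R" using n NS qS Icar by blast
      have rQ: "r \<in> carrier Q" using r sub by blast
      have "r \<otimes>\<^bsub>R\<^esub> a = r \<otimes>\<^bsub>Q\<^esub> a" by (rule mul[OF r aR])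
      also have "\<dots> = q \<otimes>\<^bsub>Q\<^esub> (r \<otimes>\<^bsub>Q\<^esub> n)" unfolding n(2) using qQ nQ rQ
        by (metis Q.m_assoc Q.m_comm)
      finally have "r \<otimes>\<^bsub>R\<^esub> a = q \<otimes>\<^bsub>Q\<^esub> (r \<otimes>\<^bsub>Q\<^esub> n)" .
      moreover have "r \<otimes>\<^bsub>Q\<^esub> n \<in> N" using ideal.I_l_closed[OF iN n(1)] r RS Sr_simps by auto
      ultimately show ?thesis by blast
    qed
  qed
  define B where "B = (\<lambda>n. q \<otimes>\<^bsub>Q\<^esub> n) ` S"
  have iB: "ideal B R" unfolding B_def using img_ideal[OF ring.oneideal[OF cring.axioms(1)[OF cS]]] Sr_simps by simp
  have BI: "B \<subseteq> I" unfolding B_def using qS by blast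
  have qB: "q \<in> B" unfolding B_def using oneS qQ by force
  have BnI: "B \<noteq> I"
  proof
    assume BIe: "B = I"
    have "I \<cdot>\<^bsub>R\<^esub> I = (\<lambda>a. q \<otimes>\<^bsub>R\<^esub> a) ` I"
    proof
      show "I \<cdot>\<^bsub>R\<^esub> I \<subseteq> (\<lambda>a. q \<otimes>\<^bsub>R\<^esub> a) ` I"
      proof
        fix x assume "x \<in> I \<cdot>\<^bsub>R\<^esub> I"
        then show "x \<in> (\<lambda>a. q \<otimes>\<^bsub>R\<^esub> a) ` I"
        proof (induct x rule: ideal_prod.induct)
          case (prod i j)
          then obtain y where y: "y \<in> S" "i = q \<otimes>\<^bsub>Q\<^esub> y" using BIe unfolding B_def by blast
          have yQ: "y \<in> carrier Q" using y SQ by blast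
          have iR: "i \<in> carrier R" "j \<in> carrier R" using prod Icar by blast+
          have jQ: "j \<in> carrier Q" using iR sub by blast
          have yj: "y \<otimes>\<^bsub>Q\<^esub> j \<in> I" using y(1) prod(2) Smem by blast
          have yjR: "y \<otimes>\<^bsub>Q\<^esub> j \<in> carrier R" using yj Icar by blast
          have "i \<otimes>\<^bsub>R\<^esub> j = i \<otimes>\<^bsub>Q\<^esub> j" by (rule mul[OF iR])
          also have "\<dots> = q \<otimes>\<^bsub>Q\<^esub> (y \<otimes>\<^bsub>Q\<^esub> j)" unfolding y(2) using qQ yQ jQ by (simp add: Q.m_assoc)
          also have "\<dots> = q \<otimes>\<^bsub>R\<^esub> (y \<otimes>\<^bsub>Q\<^esub> j)" using mul[OF qR yjR] by simp
          finally show ?case using yj by blast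
        next
          case (sum s1 s2)
          then obtain a1 a2 where a: "a1 \<in> I" "a2 \<in> I" "s1 = q \<otimes>\<^bsub>R\<^esub> a1" "s2 = q \<otimes>\<^bsub>R\<^esub> a2" by blast
          have aR: "a1 \<in> carrier R" "a2 \<in> carrier R" using a Icar by blast+
          have "s1 \<oplus>\<^bsub>R\<^esub> s2 = q \<otimes>\<^bsub>R\<^esub> (a1 \<oplus>\<^bsub>R\<^esub> a2)" unfolding a(3,4) using qR aR by (simp add: R.r_distr)
          moreover have "a1 \<oplus>\<^bsub>R\<^esub> a2 \<in> I" using additive_subgroup.a_closed[OF ideal.axioms(1)[OF iI] a(1,2)] .
          ultimately show ?case by blast
        qed
      qed
      show "(\<lambda>a. q \<otimes>\<^bsub>R\<^esub> a) ` I \<subseteq> I \<cdot>\<^bsub>R\<^esub> I" using qI by (auto intro: ideal_prod.prod)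
    qed
    then show False using II by simp
  qed
  obtain Ks :: "'a set list" where Ks: "length Ks = Suc 2" "Ks ! 0 = J" "Ks ! 2 = I"
    "\<forall>K\<in>set Ks. ideal K R"
    "\<forall>i<2. Ks ! i \<subset> Ks ! Suc i \<and> \<not> (\<exists>K. ideal K R \<and> Ks ! i \<subset> K \<and> K \<subset> Ks ! Suc i)"
    using len unfolding quotient_length_eq_def by blast
  define K1 where "K1 = Ks ! 1"
  have iK1: "ideal K1 R" unfolding K1_def using Ks(1,4) by simp
  have c0: "J \<subset> K1" "\<not> (\<exists>L. ideal L R \<and> J \<subset> L \<and> L \<subset> K1)"
    using Ks(5)[rule_format, of 0] Ks(2) unfolding K1_def by auto
  have c1: "K1 \<subset> I" "\<not> (\<exists>L. ideal L R \<and> K1 \<subset> L \<and> L \<subset> I)"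
    using Ks(5)[rule_format, of 1] Ks(3) unfolding K1_def by (auto simp: numeral_2_eq_2)
  have maxM: "maximalideal M Sr"
  proof (rule maximalidealI[OF iM notcarr])
    fix N assume iN: "ideal N Sr" and MN: "M \<subseteq> N" and NS': "N \<subseteq> carrier Sr"
    show "N = M \<or> N = carrier Sr"
    proof (rule ccontr)
      assume nn: "\<not> (N = M \<or> N = carrier Sr)"
      define A where "A = (\<lambda>n. q \<otimes>\<^bsub>Q\<^esub> n) ` N"
      have iA: "ideal A R" unfolding A_def by (rule img_ideal[OF iN])
      have NS: "N \<subseteq> S" using NS' Sr_simps by simp
      have AB: "A \<subseteq> B" unfolding A_def B_def using NS by blast
      have JA: "J \<subseteq> A"
      proof
        fix j assume j: "j \<in> J"
        have jQ: "j \<in> carrier Q" using j Jcar sub by blast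
        have "qi \<otimes>\<^bsub>Q\<^esub> j \<in> N" using MN j unfolding M_def by blast
        moreover have "j = q \<otimes>\<^bsub>Q\<^esub> (qi \<otimes>\<^bsub>Q\<^esub> j)" using qcancel jQ by simp
        ultimately show "j \<in> A" unfolding A_def by blast
      qed
      have JnA: "J \<noteq> A"
      proof
        assume JAe: "J = A"
        have "N \<subseteq> M"
        proof
          fix n assume n: "n \<in> N"
          have nQ: "n \<in> carrier Q" using n NS SQ by blast
          have "q \<otimes>\<^bsub>Q\<^esub> n \<in> J" using JAe n unfolding A_def by blast
          moreover have "n = qi \<otimes>\<^bsub>Q\<^esub> (q \<otimes>\<^bsub>Q\<^esub> n)" using qcancel nQ by simp
          ultimately show "n \<in> M" unfolding M_def by blast
        qed
        then show False using nn MN by blast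
      qed
      have AnB: "A \<noteq> B"
      proof
        assume ABe: "A = B"
        then obtain n where n: "n \<in> N" "q = q \<otimes>\<^bsub>Q\<^esub> n" using qB unfolding A_def by blast
        have nQ: "n \<in> carrier Q" using n NS SQ by blast
        have "n = qi \<otimes>\<^bsub>Q\<^esub> (q \<otimes>\<^bsub>Q\<^esub> n)" using qcancel nQ by simp
        also have "\<dots> = \<one>\<^bsub>Q\<^esub>" unfolding n(2)[symmetric] using qiq by simp
        finally have "\<one>\<^bsub>Q\<^esub> \<in> N" using n(1) by simp
        then have "S \<subseteq> N"
        proof -
          assume oN: "\<one>\<^bsub>Q\<^esub> \<in> N"
          show "S \<subseteq> N"
          proof
            fix x assume x: "x \<in> S"
            have "x \<otimes>\<^bsub>Sr\<^esub> \<one>\<^bsub>Q\<^esub> \<in> N" using ideal.I_l_closed[OF iN oN] x Sr_simps by simp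
            then show "x \<in> N" using x SQ Sr_simps by auto
          qed
        qed
        then show False using nn NS Sr_simps by blast
      qed
      show False
        using chain2[OF cR iJ iK1 iI iA iB c0(1) c1(1) c0(2) c1(2)] JA JnA AB AnB BI BnI by blast
    qed
  qed
  have "\<exists>!m. maximalideal m Sr" using loc unfolding local_ring_def Sr_def S_def by blast
  then have "max_ideal Sr = M" unfolding max_ideal_def using maxM by (rule the1_equality)
  then show ?thesis unfolding Sr_def S_def M_def qi_def .
qed

end
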